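(* Let $T$ be a regular $n$-IET, $n\ge1$, over the ordered alphabet $\mathcal{A}$ with permutation $\pi\in S_{\mathcal{A}}$, and let $\mathcal{L}(T)$ be its language. Then every return word in $\mathcal{L}(T)$ is $\pi$-clustering for $\mathcal{A}$; i.e., for every $u\in\mathcal{L}(T)$ and every $w\in\mathcal{R}(u)$, $w$ is $\pi$-clustering.
   Context: An $n$-IET $T$ on $I=[\ell,r)$ over $\mathcal{A}=\{a_1<\dots<a_n\}$ is given by a partition of $I$ into left-closed right-open intervals $(I_a)_{a\in\mathcal{A}}$ of positive length ordered left to right by the order of $\mathcal{A}$, and a permutation $\pi$ of $\mathcal{A}$; $T(x)=x+\tau_a$ on $I_a$ with $\tau_a=\sum_{b:\,\pi^{-1}(b)<\pi^{-1}(a)}|I_b|-\sum_{b<a}|I_b|$. The set of formal discontinuities is $D(T)=\{\ell+\sum_{b<a}|I_b|: a\in\mathcal{A}\}\setminus\{\ell\}$; $T$ is regular (Keane condition) if the orbits $\{T^m(x):m\in\mathbb{Z}\}$ of the points of $D(T)$ are infinite and pairwise disjoint. Trajectories $\Omega_T(x)=w_0w_1\cdots$ with $w_i=a$ iff $T^i(x)\in I_a$; $\mathcal{L}(T)$ is the set of finite factors of all trajectories. Return words: $\mathcal{R}(u)=\{w\in\mathcal{A}^*: wu\in(\mathcal{L}(T)\cap u\mathcal{A}^* )\setminus\mathcal{A}^+u\mathcal{A}^+\}$. For a word $v$ of length $m$, $\mathrm{bwt}_{\mathcal{A}}(v)$ is the word of last letters of the $m$ cyclic rotations of $v$ sorted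 lexicographically w.r.t. the order of $\mathcal{A}$; $v$ is $\pi$-clustering for $\mathcal{A}$ if $\mathrm{bwt}_{\mathcal{A}}(v)=\pi(a_1)^{k_1}\cdots\pi(a_n)^{k_n}$ with $k_i=|v|_{\pi(a_i)}$. *)

theory Defs
  imports Complex_Main "HOL-Library.List_Lexorder"
begin

text \<open>An IET over the finite linearly ordered alphabet 'a (the letters a_1 < ... < a_n
 are the elements of the type, n = CARD('a) \<ge> 1), on I = [l, l + sum of lengths),
 with interval lengths lam a > 0 and permutation perm.\<close>

definition iet_start :: "real \<Rightarrow> ('a::{finite,linorder} \<Rightarrow> real) \<Rightarrow> 'a \<Rightarrow> real" where
  "iet_start l lam a = l + (\<Sum>b\<in>{b. b < a}. lam b)"

definition iet_right :: "real \<Rightarrow> ('a::{finite,linorder} \<Rightarrow> real) \<Rightarrow> real" where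
  "iet_right l lam = l + (\<Sum>b\<in>UNIV. lam b)"

definition iet_domain :: "real \<Rightarrow> ('a::{finite,linorder} \<Rightarrow> real) \<Rightarrow> real set" where
  "iet_domain l lam = {l..<iet_right l lam}"

definition iet_interval :: "real \<Rightarrow> ('a::{finite,linorder} \<Rightarrow> real) \<Rightarrow> 'a \<Rightarrow> real set" where
  "iet_interval l lam a = {iet_start l lam a ..< iet_start l lam a + lam a}"

definition iet_transl :: "('a::{finite,linorder} \<Rightarrow> real) \<Rightarrow> ('a \<Rightarrow> 'a) \<Rightarrow> 'a \<Rightarrow> real" where
  "iet_transl lam perm a =
     (\<Sum>b\<in>{b. inv perm b < inv perm a}. lam b) - (\<Sum>b\<in>{b. b < a}. lam b)"

text \<open>The map T; outside I it is (irrelevantly) the identity.\<close>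
definition iet_map :: "real \<Rightarrow> ('a::{finite,linorder} \<Rightarrow> real) \<Rightarrow> ('a \<Rightarrow> 'a) \<Rightarrow> real \<Rightarrow> real" where
  "iet_map l lam perm x =
     (if \<exists>a. x \<in> iet_interval l lam a
      then x + iet_transl lam perm (THE a. x \<in> iet_interval l lam a) else x)"

definition iet_disc :: "real \<Rightarrow> ('a::{finite,linorder} \<Rightarrow> real) \<Rightarrow> real set" where
  "iet_disc l lam = (iet_start l lam ` UNIV) - {l}"

text \<open>Two-sided orbit {T^m x : m \<in> \<int>} of a point x of I (T is a bijection of I).\<close>
definition iet_orbit :: "real \<Rightarrow> ('a::{finite,linorder} \<Rightarrow> real) \<Rightarrow> ('a \<Rightarrow> 'a) \<Rightarrow> real \<Rightarrow> real set" where
  "iet_orbit l lam perm x =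
     {y \<in> iet_domain l lam. \<exists>m::nat. (iet_map l lam perm ^^ m) x = y \<or> (iet_map l lam perm ^^ m) y = x}"

definition iet_regular :: "real \<Rightarrow> ('a::{finite,linorder} \<Rightarrow> real) \<Rightarrow> ('a \<Rightarrow> 'a) \<Rightarrow> bool" where
  "iet_regular l lam perm \<longleftrightarrow>
     (\<forall>d\<in>iet_disc l lam. infinite (iet_orbit l lam perm d)) \<and>
     (\<forall>d\<in>iet_disc l lam. \<forall>d'\<in>iet_disc l lam. d \<noteq> d' \<longrightarrow>
        iet_orbit l lam perm d \<inter> iet_orbit l lam perm d' = {})"

definition iet_traj :: "real \<Rightarrow> ('a::{finite,linorder} \<Rightarrow> real) \<Rightarrow> ('a \<Rightarrow> 'a) \<Rightarrow> real \<Rightarrow> nat \<Rightarrow> 'a" where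
  "iet_traj l lam perm x i = (THE a. (iet_map l lam perm ^^ i) x \<in> iet_interval l lam a)"

definition iet_language :: "real \<Rightarrow> ('a::{finite,linorder} \<Rightarrow> real) \<Rightarrow> ('a \<Rightarrow> 'a) \<Rightarrow> 'a list set" where
  "iet_language l lam perm =
     {w. \<exists>x\<in>iet_domain l lam. \<exists>k. w = map (iet_traj l lam perm x) [k..<k + length w]}"

definition return_words :: "'a list set \<Rightarrow> 'a list \<Rightarrow> 'a list set" where
  "return_words L u =
     {w. w @ u \<in> L \<and> (\<exists>v. w @ u = u @ v) \<and>
         \<not> (\<exists>p s. p \<noteq> [] \<and> s \<noteq> [] \<and> w @ u = p @ u @ s)}"

text \<open>Burrows-Wheeler transform w.r.t. the order of the alphabet (lexicographic order on words).\<close>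
definition bwt :: "'a::linorder list \<Rightarrow> 'a list" where
  "bwt v = map last (sort (map (\<lambda>i. rotate i v) [0..<length v]))"

definition pi_clustering :: "('a::{finite,linorder} \<Rightarrow> 'a) \<Rightarrow> 'a list \<Rightarrow> bool" where
  "pi_clustering perm v \<longleftrightarrow>
     bwt v = concat (map (\<lambda>a. replicate (count_list v (perm a)) (perm a)) (sorted_list_of_set UNIV))"

end

theory Submission
  imports Defs "HOL-Library.Multiset"
begin

lemma sum_less_le:
  fixes f :: "'a::finite \<Rightarrow> 'b::linorder" and lam :: "'a \<Rightarrow> real"
  assumes pos: "\<And>a. lam a > 0" and ab: "f a < f b"
  shows "(\<Sum>c\<in>{c. f c < f a}. lam c) + lam a \<le> (\<Sum>c\<in>{c. f c < f b}. lam c)"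
proof -
  have sub: "{c. f c < f a} \<union> {a} \<subseteq> {c. f c < f b}" using ab by auto
  have "(\<Sum>c\<in>{c. f c < f a} \<union> {a}. lam c) \<le> (\<Sum>c\<in>{c. f c < f b}. lam c)"
    by (rule sum_mono2[OF _ sub]) (auto intro: less_imp_le pos)
  moreover have "(\<Sum>c\<in>{c. f c < f a} \<union> {a}. lam c) = (\<Sum>c\<in>{c. f c < f a}. lam c) + lam a"
    by (subst sum.union_disjoint) auto
  ultimately show ?thesis by simp
qed

lemma sum_plus_le_total:
  fixes f :: "'a::finite \<Rightarrow> 'b::linorder" and lam :: "'a \<Rightarrow> real"
  assumes pos: "\<And>a. lam a > 0"
  shows "(\<Sum>c\<in>{c. f c < f a}. lam c) + lam a \<le> (\<Sum>c\<in>UNIV. lam c)"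
proof -
  have "(\<Sum>c\<in>{c. f c < f a} \<union> {a}. lam c) \<le> (\<Sum>c\<in>UNIV. lam c)"
    by (rule sum_mono2) (auto intro: less_imp_le pos)
  moreover have "(\<Sum>c\<in>{c. f c < f a} \<union> {a}. lam c) = (\<Sum>c\<in>{c. f c < f a}. lam c) + lam a"
    by (subst sum.union_disjoint) auto
  ultimately show ?thesis by simp
qed

lemma sum_nonneg_pos:
  fixes lam :: "'a::finite \<Rightarrow> real"
  assumes pos: "\<And>a. lam a > 0"
  shows "0 \<le> (\<Sum>c\<in>A. lam c)"
  by (rule sum_nonneg) (auto intro: less_imp_le pos)

lemma start_le:
  fixes lam :: "'a::{finite,linorder} \<Rightarrow> real"
  assumes pos: "\<And>a. lam a > 0" and ab: "a < b"
  shows "iet_start l lam a + lam a \<le> iet_start l lam b"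
  using sum_less_le[of lam "\<lambda>x. x" a b] pos ab unfolding iet_start_def by simp

lemma interval_disj:
  fixes lam :: "'a::{finite,linorder} \<Rightarrow> real"
  assumes pos: "\<And>a. lam a > 0"
    and "x \<in> iet_interval l lam a" and "x \<in> iet_interval l lam b"
  shows "a = b"
proof (rule ccontr)
  assume "a \<noteq> b"
  then consider "a < b" | "b < a" by fastforce
  then show False
  proof cases
    case 1 then show ?thesis using start_le[of lam a b l, OF pos 1] assms(2,3) unfolding iet_interval_def by auto
  next
    case 2 then show ?thesis using start_le[of lam b a l, OF pos 2] assms(2,3) unfolding iet_interval_def by auto
  qed
qed

lemma interval_the:
  fixes lam :: "'a::{finite,linorder} \<Rightarrow> real"
  assumes pos: "\<And>a. lam a > 0" and "x \<in> iet_interval l lam a"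
  shows "(THE a. x \<in> iet_interval l lam a) = a"
  using assms interval_disj[of lam, OF pos] by (blast intro: the_equality)

lemma interval_exists:
  fixes lam :: "'a::{finite,linorder} \<Rightarrow> real"
  assumes pos: "\<And>a. lam a > 0" and x: "x \<in> iet_domain l lam"
  shows "\<exists>a. x \<in> iet_interval l lam a"
proof -
  define A where "A = {a. iet_start l lam a \<le> x}"
  define a0 where "a0 = Min (UNIV :: 'a set)"
  have "{b. b < a0} = {}" unfolding a0_def using Min_le[of "UNIV::'a set"] by (auto simp: not_less[symmetric])
  then have "iet_start l lam a0 = l" unfolding iet_start_def by simp
  then have "a0 \<in> A" using x unfolding A_def iet_domain_def by simp
  then have Ane: "A \<noteq> {}" by auto
  define a where "a = Max A"
  have aA: "a \<in> A" unfolding a_def using Ane by (intro Max_in) auto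
  have amax: "\<And>b. b \<in> A \<Longrightarrow> b \<le> a" unfolding a_def by (intro Max_ge) auto
  have "x < iet_start l lam a + lam a"
  proof (rule ccontr)
    assume ge: "\<not> x < iet_start l lam a + lam a"
    show False
    proof (cases "\<exists>b. b > a")
      case True
      define b0 where "b0 = Min {b. b > a}"
      have b0in: "b0 > a" unfolding b0_def using True by (metis (mono_tags) Min_in finite mem_Collect_eq empty_iff)
      have b0min: "\<And>c. c > a \<Longrightarrow> b0 \<le> c" unfolding b0_def by (intro Min_le) auto
      have eq: "{c. c < b0} = {c. c < a} \<union> {a}"
        using b0in b0min by (auto simp: not_less[symmetric]) (meson antisym_conv3 order.strict_trans2 leD)
      have "iet_start l lam b0 = iet_start l lam a + lam a"
        unfolding iet_start_def eq by (subst sum.union_disjoint) auto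
      then have "b0 \<in> A" using ge unfolding A_def by simp
      then show False using amax b0in by force
    next
      case False
      then have "{c. c < a} \<union> {a} = UNIV" using not_less_iff_gr_or_eq by auto
      then have "(\<Sum>c\<in>UNIV. lam c) = (\<Sum>c\<in>{c. c < a} \<union> {a}. lam c)" by simp
      also have "\<dots> = (\<Sum>c\<in>{c. c < a}. lam c) + lam a" by (subst sum.union_disjoint) auto
      finally have "iet_start l lam a + lam a = iet_right l lam"
        unfolding iet_start_def iet_right_def by simp
      then show False using ge x unfolding iet_domain_def by simp
    qed
  qed
  then have "x \<in> iet_interval l lam a" using aA unfolding A_def iet_interval_def by simp
  then show ?thesis by blast
qed

lemma map_on_interval:
  fixes lam :: "'a::{finite,linorder} \<Rightarrow> real"
  assumes pos: "\<And>a. lam a > 0" and x: "x \<in> iet_interval l lam a"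
  shows "iet_map l lam perm x = x + iet_transl lam perm a"
  using x interval_the[of lam, OF pos x] unfolding iet_map_def by auto

lemma map_image:
  fixes lam :: "'a::{finite,linorder} \<Rightarrow> real"
  assumes pos: "\<And>a. lam a > 0" and x: "x \<in> iet_interval l lam a"
  shows "l + (\<Sum>b\<in>{b. inv perm b < inv perm a}. lam b) \<le> iet_map l lam perm x
     \<and> iet_map l lam perm x < l + (\<Sum>b\<in>{b. inv perm b < inv perm a}. lam b) + lam a"
  using x map_on_interval[of lam, OF pos x, of perm]
  unfolding iet_transl_def iet_interval_def iet_start_def by auto

lemma map_domain:
  fixes lam :: "'a::{finite,linorder} \<Rightarrow> real"
  assumes pos: "\<And>a. lam a > 0" and x: "x \<in> iet_domain l lam"
  shows "iet_map l lam perm x \<in> iet_domain l lam"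
proof -
  obtain a where a: "x \<in> iet_interval l lam a" using interval_exists[of lam, OF pos x] by blast
  show ?thesis using map_image[of lam, OF pos a, of perm]
     sum_plus_le_total[of lam "inv perm" a, OF pos] sum_nonneg_pos[of lam, OF pos, of "{b. inv perm b < inv perm a}"]
    unfolding iet_domain_def iet_right_def by auto
qed

lemma funpow_domain:
  fixes lam :: "'a::{finite,linorder} \<Rightarrow> real"
  assumes pos: "\<And>a. lam a > 0" and x: "x \<in> iet_domain l lam"
  shows "(iet_map l lam perm ^^ n) x \<in> iet_domain l lam"
  by (induction n) (auto simp: x map_domain[of lam, OF pos])

lemma traj_in:
  fixes lam :: "'a::{finite,linorder} \<Rightarrow> real"
  assumes pos: "\<And>a. lam a > 0" and x: "x \<in> iet_domain l lam"
  shows "(iet_map l lam perm ^^ i) x \<in> iet_interval l lam (iet_traj l lam perm x i)"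
proof -
  obtain a where a: "(iet_map l lam perm ^^ i) x \<in> iet_interval l lam a"
    using interval_exists[of lam, OF pos funpow_domain[of lam, OF pos x]] by blast
  show ?thesis unfolding iet_traj_def interval_the[of lam, OF pos a] using a .
qed

lemma traj_shift:
  "iet_traj l lam perm ((iet_map l lam perm ^^ k) x) i = iet_traj l lam perm x (i + k)"
  unfolding iet_traj_def by (simp add: funpow_add)

lemma order_traj:
  fixes lam :: "'a::{finite,linorder} \<Rightarrow> real"
  assumes pos: "\<And>a. lam a > 0" and x: "x \<in> iet_domain l lam" and x': "x' \<in> iet_domain l lam"
    and eq: "\<forall>k<t. iet_traj l lam perm x k = iet_traj l lam perm x' k"
    and lt: "iet_traj l lam perm x t < iet_traj l lam perm x' t"
  shows "x < x'"
proof -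
  let ?T = "iet_map l lam perm"
  have "k \<le> t \<Longrightarrow> (?T ^^ k) x' - (?T ^^ k) x = x' - x" for k
  proof (induction k)
    case 0 then show ?case by simp
  next
    case (Suc k)
    then have kt: "k < t" by simp
    have e: "iet_traj l lam perm x k = iet_traj l lam perm x' k" using eq kt by blast
    have i1: "(?T ^^ k) x \<in> iet_interval l lam (iet_traj l lam perm x k)" by (rule traj_in[of lam, OF pos x])
    have i2: "(?T ^^ k) x' \<in> iet_interval l lam (iet_traj l lam perm x k)" using traj_in[of lam, OF pos x', where perm=perm and i=k] e by simp
    show ?case using Suc map_on_interval[of lam, OF pos i1, of perm] map_on_interval[of lam, OF pos i2, of perm] by simp
  qed
  then have d: "(?T ^^ t) x' - (?T ^^ t) x = x' - x" by simp
  have i1: "(?T ^^ t) x \<in> iet_interval l lam (iet_traj l lam perm x t)" by (rule traj_in[of lam, OF pos x])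
  have i2: "(?T ^^ t) x' \<in> iet_interval l lam (iet_traj l lam perm x' t)" by (rule traj_in[of lam, OF pos x'])
  have "(?T ^^ t) x < (?T ^^ t) x'"
    using i1 i2 start_le[of lam _ _ l, OF pos lt] unfolding iet_interval_def by auto
  then show ?thesis using d by simp
qed

lemma order_image:
  fixes lam :: "'a::{finite,linorder} \<Rightarrow> real"
  assumes pos: "\<And>a. lam a > 0" and x: "x \<in> iet_interval l lam a" and x': "x' \<in> iet_interval l lam b"
    and lt: "iet_map l lam perm x < iet_map l lam perm x'"
  shows "inv perm a \<le> inv perm b"
proof (rule ccontr)
  assume "\<not> inv perm a \<le> inv perm b"
  then have "inv perm b < inv perm a" by simp
  from sum_less_le[of lam "inv perm", OF pos this] map_image[of lam, OF pos x, of perm] map_image[of lam, OF pos x', of perm] lt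
  show False by auto
qed

lemma first_diff:
  assumes z: "z = w @ u" and nr: "\<not> (\<exists>p s. p \<noteq> [] \<and> s \<noteq> [] \<and> z = p @ u @ s)"
    and i: "1 \<le> i" "i < j" "j \<le> length w"
  shows "\<exists>t < length z - j. z ! (i + t) \<noteq> z ! (j + t)"
proof (rule ccontr)
  assume "\<not> ?thesis"
  then have eq: "\<forall>t < length z - j. z ! (i + t) = z ! (j + t)" by blast
  have lz: "length z = length w + length u" using z by simp
  have tk: "take (length z - j) (drop i z) = drop j z"
    by (rule nth_equalityI) (use eq i lz in auto)
  define rest where "rest = drop (length z - j) (drop i z)"
  have rl: "length rest = j - i" unfolding rest_def using i lz by simp
  have "z = take i z @ drop i z" by simp
  also have "drop i z = drop j z @ rest" unfolding rest_def tk[symmetric] by (rule append_take_drop_id[symmetric])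
  also have "drop j z = drop j w @ u" using z i by simp
  finally have "z = (take i z @ drop j w) @ u @ rest" by simp
  moreover have "take i z @ drop j w \<noteq> []" using i lz by (cases "take i z") auto
  moreover have "rest \<noteq> []" using rl i by auto
  ultimately show False using nr by blast
qed

lemma rot_nth:
  assumes z: "z = w @ u" "z = u @ v" and i: "i \<le> length w" and k: "k < length w" "k < length z - i"
  shows "(drop i w @ take i w) ! k = z ! (i + k)"
proof (cases "k < length w - i")
  case True then have "i + k < length w" by simp
  then show ?thesis using z i True by (simp add: nth_append)
next
  case False
  define q where "q = i + k - length w"
  have q1: "q < length u" using k z False unfolding q_def by simp
  have q2: "q < length w" using k i False unfolding q_def by simp
  have "w ! q = u ! q" using q1 q2 z by (metis nth_append)
  have a1: "(drop i w @ take i w) ! k = take i w ! (k - (length w - i))"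
    using False i by (simp add: nth_append)
  have a2: "k - (length w - i) = q" unfolding q_def using False i by simp
  have a3: "take i w ! q = w ! q" using q2 False i k unfolding q_def by simp
  have nl: "\<not> i + k < length w" using False i by simp
  have a4: "z ! (i + k) = u ! q" using z(1) nl unfolding q_def by (simp add: nth_append)
  show ?thesis using a1 a2 a3 a4 \<open>w ! q = u ! q\<close> by simp
qed

lemma rot_core:
  fixes w u :: "'a::linorder list" and key :: "'a \<Rightarrow> 'b::linorder"
  assumes z: "z = w @ u" "z = u @ v" and nr: "\<not> (\<exists>p s. p \<noteq> [] \<and> s \<noteq> [] \<and> z = p @ u @ s)"
    and H: "\<And>i j t. 1 \<le> i \<Longrightarrow> i \<le> length w \<Longrightarrow> 1 \<le> j \<Longrightarrow> j \<le> length w \<Longrightarrow>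
       t < length z - i \<Longrightarrow> t < length z - j \<Longrightarrow> (\<forall>k<t. z!(i+k) = z!(j+k)) \<Longrightarrow> z!(i+t) < z!(j+t) \<Longrightarrow>
       key (w!(i-1)) \<le> key (w!(j-1))"
    and ij: "1 \<le> i" "i \<le> length w" "1 \<le> j" "j \<le> length w"
    and lt: "drop i w @ take i w < drop j w @ take j w"
  shows "key (w!(i-1)) \<le> key (w!(j-1))"
proof -
  let ?ri = "drop i w @ take i w" and ?rj = "drop j w @ take j w"
  let ?m = "length w"
  have lz: "length z = length w + length u" using z by simp
  have "i \<noteq> j" using lt by auto
  then have "\<exists>t. t < length z - i \<and> t < length z - j \<and> z ! (i + t) \<noteq> z ! (j + t)"
  proof (cases "i < j")
    case True
    then obtain t where "t < length z - j" "z ! (i + t) \<noteq> z ! (j + t)" using first_diff[OF z(1) nr ij(1) True ij(4)] by blast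
    moreover have "t < length z - i" using calculation(1) True by linarith
    ultimately show ?thesis by blast
  next
    case False
    then have ji: "j < i" using \<open>i \<noteq> j\<close> by simp
    then obtain t where "t < length z - i" "z ! (j + t) \<noteq> z ! (i + t)" using first_diff[OF z(1) nr ij(3) ji ij(2)] by blast
    moreover have "t < length z - j" using calculation(1) ji by linarith
    ultimately show ?thesis by metis
  qed
  then obtain t0 where t0: "t0 < length z - i \<and> t0 < length z - j \<and> z ! (i + t0) \<noteq> z ! (j + t0)" by blast
  define t where "t = (LEAST t. t < length z - i \<and> t < length z - j \<and> z ! (i + t) \<noteq> z ! (j + t))"
  have tP: "t < length z - i \<and> t < length z - j \<and> z ! (i + t) \<noteq> z ! (j + t)"
    unfolding t_def by (rule LeastI[of _ t0]) (use t0 in blast)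
  have tmin: "\<forall>k<t. z!(i+k) = z!(j+k)"
  proof (intro allI impI)
    fix k assume "k < t"
    then have "\<not> (k < length z - i \<and> k < length z - j \<and> z ! (i + k) \<noteq> z ! (j + k))"
      unfolding t_def by (rule not_less_Least)
    then show "z!(i+k) = z!(j+k)" using \<open>k < t\<close> tP by auto
  qed
  have lri: "length ?ri = ?m" "length ?rj = ?m" using ij by auto
  show ?thesis
  proof (cases "t < ?m")
    case False
    have "?ri = ?rj"
    proof (rule nth_equalityI)
      show "length ?ri = length ?rj" using lri by simp
      fix k assume "k < length ?ri"
      then have k: "k < ?m" using lri by simp
      then have "k < t" using False by simp
      then show "?ri ! k = ?rj ! k"
        using rot_nth[OF z ij(2) k] rot_nth[OF z ij(4) k] tmin tP by auto
    qed
    then show ?thesis using lt by simp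
  next
    case True
    have ri_t: "?ri ! t = z!(i+t)" using rot_nth[OF z ij(2) True] tP by simp
    have rj_t: "?rj ! t = z!(j+t)" using rot_nth[OF z ij(4) True] tP by simp
    have rik: "\<And>k. k < t \<Longrightarrow> ?ri ! k = ?rj ! k"
      using rot_nth[OF z ij(2)] rot_nth[OF z ij(4)] tmin tP True by auto
    from lt obtain i' where i': "i' < ?m" "take i' ?ri = take i' ?rj" "?ri ! i' < ?rj ! i'"
      unfolding list_less_def lexord_take_index_conv using lri by auto
    have "i' = t"
    proof (rule ccontr)
      assume "i' \<noteq> t"
      then consider "i' < t" | "t < i'" by linarith
      then show False
      proof cases
        case 1 then show ?thesis using rik[OF 1] i'(3) by simp
      next
        case 2
        have "?ri ! t = ?rj ! t" using i'(2) nth_take[OF 2, of ?ri] nth_take[OF 2, of ?rj] by metis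
        then show ?thesis using ri_t rj_t tP by simp
      qed
    qed
    then have "z!(i+t) < z!(j+t)" using i'(3) ri_t rj_t by simp
    then show ?thesis using H[OF ij _ _ tmin] tP by blast
  qed
qed

lemma mset_rotate_eq: "mset (rotate n xs) = mset xs"
proof -
  have "mset (rotate n xs) = mset (drop (n mod length xs) xs) + mset (take (n mod length xs) xs)"
    by (simp add: rotate_drop_take)
  also have "\<dots> = mset xs" by (metis append_take_drop_id mset_append add.commute)
  finally show ?thesis .
qed

lemma last_rots: "map last (map (\<lambda>i. rotate i w) [0..<length w]) = rotate (length w - 1) w"
proof (cases "w = []")
  case True then show ?thesis by simp
next
  case False
  then have m: "length w > 0" by simp
  show ?thesis
  proof (rule nth_equalityI)
    show "length (map last (map (\<lambda>i. rotate i w) [0..<length w])) = length (rotate (length w - 1) w)" by simp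
    fix i assume "i < length (map last (map (\<lambda>i. rotate i w) [0..<length w]))"
    then have i: "i < length w" by simp
    have "last (rotate i w) = rotate i w ! (length w - 1)"
      using False by (simp add: last_conv_nth)
    also have "\<dots> = w ! ((i + (length w - 1)) mod length w)" using m by (simp add: nth_rotate)
    also have "\<dots> = rotate (length w - 1) w ! i" using i by (simp add: nth_rotate add.commute)
    finally show "map last (map (\<lambda>i. rotate i w) [0..<length w]) ! i = rotate (length w - 1) w ! i"
      using i by simp
  qed
qed

lemma mset_bwt: "mset (bwt w) = mset w"
proof -
  have "mset (bwt w) = image_mset last (mset (map (\<lambda>i. rotate i w) [0..<length w]))"
    unfolding bwt_def by simp
  also have "\<dots> = mset (map last (map (\<lambda>i. rotate i w) [0..<length w]))" by (simp only: mset_map)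
  also have "\<dots> = mset w" unfolding last_rots mset_rotate_eq ..
  finally show ?thesis .
qed

lemma bwt_sorted:
  fixes w :: "'a::linorder list" and key :: "'a \<Rightarrow> 'b::linorder"
  assumes R: "\<And>p q. p < length w \<Longrightarrow> q < length w \<Longrightarrow> rotate p w < rotate q w \<Longrightarrow>
     key (last (rotate p w)) \<le> key (last (rotate q w))"
  shows "sorted (map key (bwt w))"
proof -
  define S where "S = sort (map (\<lambda>i. rotate i w) [0..<length w])"
  have sS: "sorted S" unfolding S_def by simp
  have setS: "set S = (\<lambda>i. rotate i w) ` {0..<length w}" unfolding S_def by simp
  have "sorted (map key (map last S))"
    unfolding sorted_iff_nth_mono_less
  proof (intro allI impI)
    fix i j assume ij: "i < j" "j < length (map key (map last S))"
    then have j: "j < length S" by simp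
    have le: "S ! i \<le> S ! j" using sS ij j by (simp add: sorted_iff_nth_mono_less)
    have "S ! i \<in> set S" "S ! j \<in> set S" using ij j by auto
    then obtain p q where p: "p < length w" "S ! i = rotate p w" and q: "q < length w" "S ! j = rotate q w"
      unfolding setS by auto
    show "map key (map last S) ! i \<le> map key (map last S) ! j"
    proof (cases "S ! i = S ! j")
      case True then show ?thesis using ij j by simp
    next
      case False
      then have "rotate p w < rotate q w" using le p q by simp
      then show ?thesis using R[OF p(1) q(1)] p q ij j by simp
    qed
  qed
  then show ?thesis unfolding bwt_def S_def by simp
qed

lemma count_concat_map:
  assumes "distinct xs"
  shows "count (mset (concat (map f xs))) c = (\<Sum>a\<in>set xs. count (mset (f a)) c)"
  using assms by (induction xs) auto

lemma sorted_concat_rep: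
  fixes xs :: "'b::linorder list"
  assumes "sorted xs"
  shows "sorted (concat (map (\<lambda>a. replicate (g a) a) xs))"
  using assms
proof (induction xs)
  case Nil then show ?case by simp
next
  case (Cons a xs)
  then have s: "sorted (concat (map (\<lambda>a. replicate (g a) a) xs))" by simp
  have ge: "\<forall>y\<in>set (concat (map (\<lambda>a. replicate (g a) a) xs)). a \<le> y" using Cons.prems by auto
  show ?case using s ge by (auto simp: sorted_append)
qed

lemma target_eq:
  fixes perm :: "'a::{finite,linorder} \<Rightarrow> 'a"
  assumes bij: "bij perm"
  shows "concat (map (\<lambda>a. replicate (count_list w (perm a)) (perm a)) (sorted_list_of_set UNIV))
       = sort_key (inv perm) w"
proof -
  let ?t = "concat (map (\<lambda>a. replicate (count_list w (perm a)) (perm a)) (sorted_list_of_set UNIV))"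
  have inj: "inj (inv perm)" using bij by (simp add: bij_imp_bij_inv bij_is_inj)
  have cr: "count (mset (replicate n y)) c = (if y = c then n else 0)" for n y c
    by (induction n) auto
  have "count (mset ?t) c = count (mset w) c" for c
  proof -
    have d: "distinct (sorted_list_of_set (UNIV :: 'a set))" by simp
    have st: "set (sorted_list_of_set (UNIV :: 'a set)) = UNIV" by simp
    have "count (mset ?t) c = (\<Sum>a\<in>UNIV. count (mset (replicate (count_list w (perm a)) (perm a))) c)"
      using count_concat_map[OF d, of "\<lambda>a. replicate (count_list w (perm a)) (perm a)" c] unfolding st .
    also have "\<dots> = (\<Sum>a\<in>UNIV. if a = inv perm c then count_list w c else 0)"
    proof (rule sum.cong)
      fix a :: 'a
      have "(perm a = c) = (a = inv perm c)" using bij_inv_eq_iff[OF bij, of a c] by simp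
      then show "count (mset (replicate (count_list w (perm a)) (perm a))) c = (if a = inv perm c then count_list w c else 0)"
        unfolding cr by auto
    qed simp
    also have "\<dots> = count_list w c" by (simp only: sum.delta[OF finite]) simp
    finally show ?thesis by (simp only: count_mset)
  qed
  then have ms: "mset w = mset ?t" by (simp add: multiset_eq_iff)
  have meq: "map (inv perm) ?t = concat (map (\<lambda>a. replicate (count_list w (perm a)) a) (sorted_list_of_set UNIV))"
    proof -
    have rep: "map (inv perm) (replicate n (perm a)) = replicate n a" for n a
      using inv_f_f[OF bij_is_inj[OF bij]] by (simp del: replicate.simps)
    show ?thesis by (simp only: map_concat map_map o_def rep)
  qed
  have srt0: "sorted (concat (map (\<lambda>a. replicate (count_list w (perm a)) a) (sorted_list_of_set (UNIV :: 'a set))))"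
    by (rule sorted_concat_rep) simp
  have srt: "sorted (map (inv perm) ?t)" unfolding meq by (rule srt0)
  have ij: "inj_on (inv perm) (set w)" using inj by (rule inj_on_subset) simp
  show ?thesis using sort_key_inj_key_eq[OF ms ij srt] by (rule sym)
qed

lemma rot_conv:
  assumes "p < length w"
  shows "rotate p w = drop (if p = 0 then length w else p) w @ take (if p = 0 then length w else p) w"
  using assms by (simp add: rotate_drop_take)

lemma last_conv:
  assumes "1 \<le> i" "i \<le> length w"
  shows "last (drop i w @ take i w) = w ! (i - 1)"
proof -
  have ne: "take i w \<noteq> []" using assms by (cases w) auto
  have "last (drop i w @ take i w) = last (take i w)" using ne by simp
  also have "\<dots> = take i w ! (i - 1)" using ne assms by (simp add: last_conv_nth min_absorb1)
  also have "\<dots> = w ! (i - 1)" using assms by simp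
  finally show ?thesis .
qed

theorem lemma6p2:
  fixes l :: real and lam :: "'a::{finite,linorder} \<Rightarrow> real" and perm :: "'a \<Rightarrow> 'a"
  assumes "\<And>a. lam a > 0"
    and "bij perm"
    and "iet_regular l lam perm"
    and "u \<in> iet_language l lam perm"
    and "w \<in> return_words (iet_language l lam perm) u"
  shows "pi_clustering perm w"
proof -
  note pos = assms(1)
  let ?T = "iet_map l lam perm"
  let ?tr = "iet_traj l lam perm"
  from assms(5) have wu: "w @ u \<in> iet_language l lam perm" and ev: "\<exists>v. w @ u = u @ v"
    and nr: "\<not> (\<exists>p s. p \<noteq> [] \<and> s \<noteq> [] \<and> w @ u = p @ u @ s)"
    unfolding return_words_def by auto
  obtain v where v: "w @ u = u @ v" using ev by blast
  define z where "z = w @ u"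
  have z1: "z = w @ u" and z2: "z = u @ v" using v unfolding z_def by auto
  have nrz: "\<not> (\<exists>p s. p \<noteq> [] \<and> s \<noteq> [] \<and> z = p @ u @ s)" using nr unfolding z_def .
  from wu obtain x k where x: "x \<in> iet_domain l lam"
    and zk: "z = map (?tr x) [k..<k + length z]"
    unfolding iet_language_def z_def by blast
  define y where "y = (?T ^^ k) x"
  have y: "y \<in> iet_domain l lam" using funpow_domain[of lam, OF pos x] unfolding y_def by blast
  have zy: "z ! j = ?tr y j" if "j < length z" for j
  proof -
    have "z ! j = ?tr x (k + j)" using that by (subst zk) simp
    also have "\<dots> = ?tr y j" unfolding y_def traj_shift by (simp add: add.commute)
    finally show ?thesis .
  qed
  have H: "inv perm (w!(i-1)) \<le> inv perm (w!(j-1))"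
    if ij: "1 \<le> i" "i \<le> length w" "1 \<le> j" "j \<le> length w"
      and t: "t < length z - i" "t < length z - j" and eqk: "\<forall>k<t. z!(i+k) = z!(j+k)"
      and ltt: "z!(i+t) < z!(j+t)" for i j t
  proof -
    have yi: "(?T ^^ i) y \<in> iet_domain l lam" by (rule funpow_domain[of lam, OF pos y])
    have yj: "(?T ^^ j) y \<in> iet_domain l lam" by (rule funpow_domain[of lam, OF pos y])
    have tri: "?tr ((?T ^^ i) y) k' = z ! (i + k')" if "k' < length z - i" for k'
      using zy[of "i + k'"] that traj_shift[of l lam perm i y k'] by (simp add: add.commute)
    have trj: "?tr ((?T ^^ j) y) k' = z ! (j + k')" if "k' < length z - j" for k'
      using zy[of "j + k'"] that traj_shift[of l lam perm j y k'] by (simp add: add.commute)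
    have "(?T ^^ i) y < (?T ^^ j) y"
    proof (rule order_traj[of lam, OF pos yi yj])
      show "\<forall>k<t. ?tr ((?T ^^ i) y) k = ?tr ((?T ^^ j) y) k" using eqk tri trj t by auto
      show "?tr ((?T ^^ i) y) t < ?tr ((?T ^^ j) y) t" using ltt tri trj t by auto
    qed
    moreover have "(?T ^^ i) y = ?T ((?T ^^ (i - 1)) y)"
      using ij by (metis Suc_diff_1 comp_apply funpow.simps(2) less_le_trans zero_less_one)
    moreover have "(?T ^^ j) y = ?T ((?T ^^ (j - 1)) y)"
      using ij by (metis Suc_diff_1 comp_apply funpow.simps(2) less_le_trans zero_less_one)
    moreover have "(?T ^^ (i - 1)) y \<in> iet_interval l lam (w ! (i - 1))"
    proof -
      have "?tr y (i - 1) = z ! (i - 1)" using zy[of "i - 1"] ij z1 by simp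
      also have "\<dots> = w ! (i - 1)" proof - have "i - 1 < length w" using ij by simp then show ?thesis using z1 by (simp add: nth_append) qed
      finally show ?thesis using traj_in[of lam, OF pos y, where perm=perm and i="i - 1"] by simp
    qed
    moreover have "(?T ^^ (j - 1)) y \<in> iet_interval l lam (w ! (j - 1))"
    proof -
      have "?tr y (j - 1) = z ! (j - 1)" using zy[of "j - 1"] ij z1 by simp
      also have "\<dots> = w ! (j - 1)" proof - have "j - 1 < length w" using ij by simp then show ?thesis using z1 by (simp add: nth_append) qed
      finally show ?thesis using traj_in[of lam, OF pos y, where perm=perm and i="j - 1"] by simp
    qed
    ultimately show ?thesis using order_image[of lam, OF pos] by metis
  qed
  have R: "inv perm (last (rotate p w)) \<le> inv perm (last (rotate q w))"
    if pq: "p < length w" "q < length w" "rotate p w < rotate q w" for p q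
  proof -
    define i where "i = (if p = 0 then length w else p)"
    define j where "j = (if q = 0 then length w else q)"
    have ij: "1 \<le> i" "i \<le> length w" "1 \<le> j" "j \<le> length w" using pq unfolding i_def j_def by auto
    have rp: "rotate p w = drop i w @ take i w" unfolding i_def by (rule rot_conv[OF pq(1)])
    have rq: "rotate q w = drop j w @ take j w" unfolding j_def by (rule rot_conv[OF pq(2)])
    have "inv perm (w!(i-1)) \<le> inv perm (w!(j-1))"
      by (rule rot_core[where key="inv perm", OF z1 z2 nrz H ij]) (use pq(3) rp rq in simp_all)
    then show ?thesis unfolding rp rq last_conv[OF ij(1,2)] last_conv[OF ij(3,4)] .
  qed
  have srt: "sorted (map (inv perm) (bwt w))" by (rule bwt_sorted) (rule R)
  have inj: "inj (inv perm)" using assms(2) by (simp add: bij_imp_bij_inv bij_is_inj)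
  have ij: "inj_on (inv perm) (set w)" using inj by (rule inj_on_subset) simp
  have "sort_key (inv perm) w = bwt w" using sort_key_inj_key_eq[OF mset_bwt[symmetric] ij srt] .
  then show ?thesis unfolding pi_clustering_def target_eq[OF assms(2)] by simp
qed

end
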